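(* Let $P$ be a countable multiset of primes, $G=\bigoplus_{p\in P}\mathbb{F}_p$, and let $X$ be an ergodic $G$-system. Let $F:X\to S^1$ be a phase polynomial of degree $<k$ taking values in $C_n$, where $n=p_1\cdots p_j$ for primes $p_1,\dots,p_j$ with $k<p_i$ for all $i$. Then for every $g\in G$, $\prod_{t=0}^{n-1}F(T_g^tx)=1$ for a.e. $x\in X$.
   Context: $C_n$ is the group of $n$-th roots of unity. A $G$-system is a compact metrizable probability space with measure-preserving $G$-action $(T_g)$; ergodic: only constants invariant. Phase polynomial of degree $<k$: $\Delta_{h_1}\cdots\Delta_{h_k}F=1$ a.e. for all $h_i\in G$, where $\Delta_h\phi=(\phi\circ T_h)/\phi$. *)

theory Defs
  imports "HOL-Probability.Probability"
begin

text \<open>The countable multiset of primes P is given by an index set I of naturals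
  (finite or infinite) and a labelling p, with p i prime for i in I.
  G = direct sum over i in I of F_(p i): finitely supported functions g with
  g i in {0..<p i} for i in I and g i = 0 outside I.\<close>

definition dsum_carrier :: "nat set \<Rightarrow> (nat \<Rightarrow> nat) \<Rightarrow> (nat \<Rightarrow> nat) set" where
  "dsum_carrier I p = {g. finite {i. g i \<noteq> 0} \<and> (\<forall>i. g i \<noteq> 0 \<longrightarrow> i \<in> I) \<and> (\<forall>i\<in>I. g i < p i)}"

definition dsum_add :: "nat set \<Rightarrow> (nat \<Rightarrow> nat) \<Rightarrow> (nat \<Rightarrow> nat) \<Rightarrow> (nat \<Rightarrow> nat) \<Rightarrow> (nat \<Rightarrow> nat)" where
  "dsum_add I p g h = (\<lambda>i. if i \<in> I then (g i + h i) mod p i else 0)"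

definition mp_action :: "nat set \<Rightarrow> (nat \<Rightarrow> nat) \<Rightarrow> 'a measure \<Rightarrow> ((nat \<Rightarrow> nat) \<Rightarrow> 'a \<Rightarrow> 'a) \<Rightarrow> bool" where
  "mp_action I p M T \<longleftrightarrow>
     (\<forall>g\<in>dsum_carrier I p. T g \<in> measurable M M \<and> distr M M (T g) = M) \<and>
     (\<forall>x\<in>space M. T (\<lambda>_. 0) x = x) \<and>
     (\<forall>g\<in>dsum_carrier I p. \<forall>h\<in>dsum_carrier I p. \<forall>x\<in>space M.
         T (dsum_add I p g h) x = T g (T h x))"

definition ergodic_action :: "nat set \<Rightarrow> (nat \<Rightarrow> nat) \<Rightarrow> 'a measure \<Rightarrow> ((nat \<Rightarrow> nat) \<Rightarrow> 'a \<Rightarrow> 'a) \<Rightarrow> bool" where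
  "ergodic_action I p M T \<longleftrightarrow>
     (\<forall>f :: 'a \<Rightarrow> real. f \<in> borel_measurable M \<longrightarrow>
        (\<forall>g\<in>dsum_carrier I p. AE x in M. f (T g x) = f x) \<longrightarrow>
        (\<exists>c. AE x in M. f x = c))"

definition mder :: "((nat \<Rightarrow> nat) \<Rightarrow> 'a \<Rightarrow> 'a) \<Rightarrow> (nat \<Rightarrow> nat) \<Rightarrow> ('a \<Rightarrow> complex) \<Rightarrow> 'a \<Rightarrow> complex" where
  "mder T h \<phi> = (\<lambda>x. \<phi> (T h x) / \<phi> x)"

definition phase_poly_lt :: "nat set \<Rightarrow> (nat \<Rightarrow> nat) \<Rightarrow> 'a measure \<Rightarrow> ((nat \<Rightarrow> nat) \<Rightarrow> 'a \<Rightarrow> 'a)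
    \<Rightarrow> nat \<Rightarrow> ('a \<Rightarrow> complex) \<Rightarrow> bool" where
  "phase_poly_lt I p M T k F \<longleftrightarrow>
     F \<in> borel_measurable M \<and> (\<forall>x\<in>space M. cmod (F x) = 1) \<and>
     (\<forall>hs. length hs = k \<longrightarrow> set hs \<subseteq> dsum_carrier I p \<longrightarrow>
        (AE x in M. foldr (mder T) hs F x = 1))"

end

theory Submission
  imports Defs
begin

definition Dq :: "(nat \<Rightarrow> complex) \<Rightarrow> nat \<Rightarrow> complex" where
  "Dq f = (\<lambda>t. f (Suc t) / f t)"

lemma Dq_apply: "Dq f t = f (Suc t) / f t"
  by (simp add: Dq_def)

lemma telescope:
  fixes f :: "nat \<Rightarrow> complex"
  assumes nz: "\<forall>t. f t \<noteq> 0"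
  shows "(\<Prod>t<N. f t ^ (t choose j)) * (\<Prod>s<N. Dq f s ^ (Suc s choose Suc j)) = f N ^ (N choose Suc j)"
proof (induction N)
  case 0
  then show ?case by simp
next
  case (Suc N)
  have "(\<Prod>t<Suc N. f t ^ (t choose j)) * (\<Prod>s<Suc N. Dq f s ^ (Suc s choose Suc j))
      = ((\<Prod>t<N. f t ^ (t choose j)) * (\<Prod>s<N. Dq f s ^ (Suc s choose Suc j)))
         * (f N ^ (N choose j) * Dq f N ^ (Suc N choose Suc j))"
    by (simp add: algebra_simps)
  also have "\<dots> = f N ^ (N choose Suc j) * (f N ^ (N choose j) * Dq f N ^ (Suc N choose Suc j))"
    using Suc by simp
  also have "\<dots> = f N ^ (Suc N choose Suc j) * Dq f N ^ (Suc N choose Suc j)"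
    by (simp add: power_add algebra_simps)
  also have "\<dots> = f (Suc N) ^ (Suc N choose Suc j)"
    using nz by (simp add: Dq_def power_divide del: binomial_Suc_Suc)
  finally show ?case .
qed

lemma key:
  fixes f :: "nat \<Rightarrow> complex"
  assumes "\<forall>t. f t \<noteq> 0" "\<forall>t. f t ^ n = 1" "\<forall>t. (Dq ^^ k) f t = 1"
    "\<forall>m. 0 < m \<and> m \<le> b \<longrightarrow> n dvd (n choose m)" "j + k \<le> b"
  shows "(\<Prod>t<n. f t ^ (t choose j)) = 1"
  using assms
proof (induction k arbitrary: f j)
  case 0
  then show ?case by simp
next
  case (Suc k)
  define g where "g = Dq f"
  have gnz: "\<forall>t. g t \<noteq> 0" using Suc.prems(1) by (simp add: g_def Dq_def)
  have gn: "\<forall>t. g t ^ n = 1" using Suc.prems(2) by (simp add: g_def Dq_def power_divide)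
  have gk: "\<forall>t. (Dq ^^ k) g t = 1" using Suc.prems(3) by (metis funpow_Suc_right comp_apply g_def)
  have i1: "(\<Prod>t<n. g t ^ (t choose j)) = 1"
    using Suc.IH[OF gnz gn gk Suc.prems(4)] Suc.prems(5) by simp
  have i2: "(\<Prod>t<n. g t ^ (t choose Suc j)) = 1"
    using Suc.IH[OF gnz gn gk Suc.prems(4), of "Suc j"] Suc.prems(5) by simp
  have "(\<Prod>s<n. g s ^ (Suc s choose Suc j)) = (\<Prod>t<n. g t ^ (t choose j)) * (\<Prod>t<n. g t ^ (t choose Suc j))"
    by (simp add: power_add prod.distrib)
  with i1 i2 have G: "(\<Prod>s<n. g s ^ (Suc s choose Suc j)) = 1" by simp
  have "n dvd (n choose Suc j)" using Suc.prems(4,5) by simp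
  then obtain c where c: "(n choose Suc j) = n * c" by blast
  have F: "f n ^ (n choose Suc j) = 1" using Suc.prems(2) by (simp add: c power_mult)
  show ?case using telescope[OF Suc.prems(1), where N=n and j=j] G F by (simp add: g_def)
qed

lemma coprime_prod:
  assumes "\<forall>q\<in>set ps. prime q \<and> k < q" "0 < m" "m \<le> k"
  shows "coprime m (prod_list ps :: nat)"
  using assms
proof (induction ps)
  case Nil
  then show ?case by simp
next
  case (Cons q ps)
  have "prime q" "m < q" using Cons.prems by auto
  then have "\<not> q dvd m" using Cons.prems(2) by (meson dvd_imp_le not_le)
  then have "coprime m q" using \<open>prime q\<close> by (metis coprime_commute prime_imp_coprime)
  then show ?case using Cons by simp
qed

lemma dvd_choose:
  assumes "\<forall>q\<in>set ps. prime q \<and> k < q" "0 < m" "m \<le> k"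
  shows "prod_list ps dvd (prod_list ps choose m)"
proof -
  have cp: "coprime (prod_list ps) m" using coprime_prod[OF assms] by (simp add: ac_simps)
  have "m * (prod_list ps choose m) = prod_list ps * ((prod_list ps - 1) choose (m - 1))"
    using times_binomial_minus1_eq[OF assms(2)] by simp
  then have "prod_list ps dvd m * (prod_list ps choose m)" by simp
  then show ?thesis using cp by (simp add: coprime_dvd_mult_right_iff)
qed

lemma fold_eq:
  "foldr (mder T) (replicate k g) F ((T g ^^ t) x) = (Dq ^^ k) (\<lambda>t. F ((T g ^^ t) x)) t"
proof (induction k arbitrary: t)
  case 0
  then show ?case by simp
next
  case (Suc k)
  define f' where "f' = (\<lambda>t. F ((T g ^^ t) x))"
  define P where "P = foldr (mder T) (replicate k g) F"
  have "foldr (mder T) (replicate (Suc k) g) F ((T g ^^ t) x)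
     = P (T g ((T g ^^ t) x)) / P ((T g ^^ t) x)"
    by (simp add: mder_def P_def)
  also have "\<dots> = P ((T g ^^ Suc t) x) / P ((T g ^^ t) x)"
    by (simp only: funpow.simps comp_apply)
  also have "\<dots> = (Dq ^^ k) f' (Suc t) / (Dq ^^ k) f' t"
    by (simp only: Suc P_def f'_def)
  also have "\<dots> = (Dq ^^ Suc k) f' t"
    by (simp only: funpow.simps comp_apply Dq_apply)
  finally show ?case by (simp only: f'_def)
qed

theorem propositionB12:
  fixes M :: "'a::metric_space measure"
    and I :: "nat set" and p :: "nat \<Rightarrow> nat"
    and T :: "(nat \<Rightarrow> nat) \<Rightarrow> 'a \<Rightarrow> 'a"
    and F :: "'a \<Rightarrow> complex" and k n :: nat and ps :: "nat list"
  assumes primes: "\<forall>i\<in>I. prime (p i)"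
    and prob: "prob_space M"
    and borel: "sets M = sets borel"
    and cpt: "compact (space M)"
    and act: "mp_action I p M T"
    and erg: "ergodic_action I p M T"
    and phase: "phase_poly_lt I p M T k F"
    and rootsn: "\<forall>x\<in>space M. F x ^ n = 1"
    and n_def: "n = prod_list ps"
    and ps_primes: "\<forall>q\<in>set ps. prime q \<and> k < q"
  shows "\<forall>g\<in>dsum_carrier I p. AE x in M. (\<Prod>t<n. F ((T g ^^ t) x)) = 1"
proof
  fix g assume g: "g \<in> dsum_carrier I p"
  define S where "S = T g"
  have Sm: "S \<in> measurable M M" and Sd: "distr M M S = M"
    using act g by (auto simp: mp_action_def S_def)
  have meas: "(S ^^ t) \<in> measurable M M" for t
  proof (induction t)
    case (Suc t)
    have "S ^^ Suc t = S \<circ> (S ^^ t)" by simp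
    then show ?case using measurable_comp[OF Suc Sm] by (simp add: comp_def)
  qed simp
  have dis: "distr M M (S ^^ t) = M" for t
  proof (induction t)
    case 0
    then show ?case by (simp add: distr_id2)
  next
    case (Suc t)
    have "distr M M (S ^^ Suc t) = distr (distr M M (S ^^ t)) M S"
      using distr_distr[OF Sm meas[of t]] by simp
    then show ?case using Suc Sd by (simp add: comp_def)
  qed
  define \<Phi> where "\<Phi> = foldr (mder T) (replicate k g) F"
  have ae0: "AE x in M. \<Phi> x = 1"
  proof -
    have "set (replicate k g) \<subseteq> dsum_carrier I p" using g by auto
    moreover have "length (replicate k g) = k" by simp
    ultimately show ?thesis using phase unfolding phase_poly_lt_def \<Phi>_def by blast
  qed
  have aet: "AE x in M. \<Phi> ((S ^^ t) x) = 1" for t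
  proof -
    have "AE x in distr M M (S ^^ t). \<Phi> x = 1" unfolding dis[of t] by (rule ae0)
    then show ?thesis by (rule AE_distrD[OF meas])
  qed
  then have "AE x in M. \<forall>t. \<Phi> ((S ^^ t) x) = 1" by (simp add: AE_all_countable)
  then show "AE x in M. (\<Prod>t<n. F ((T g ^^ t) x)) = 1"
    using AE_space
  proof eventually_elim
    case (elim x)
    define f where "f = (\<lambda>t. F ((T g ^^ t) x))"
    have sp: "(S ^^ t) x \<in> space M" for t using meas[of t] elim(2) by (rule measurable_space)
    have nz: "\<forall>t. f t \<noteq> 0"
    proof
      fix t
      have "cmod (F ((S ^^ t) x)) = 1" using phase sp[of t] by (simp add: phase_poly_lt_def)
      then show "f t \<noteq> 0" by (auto simp: f_def S_def)
    qed
    have pw: "\<forall>t. f t ^ n = 1" using rootsn sp by (simp add: f_def S_def)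
    have dk: "\<forall>t. (Dq ^^ k) f t = 1"
      using elim(1) fold_eq[of T k g F] by (simp add: f_def \<Phi>_def S_def)
    have dv: "\<forall>m. 0 < m \<and> m \<le> k \<longrightarrow> n dvd (n choose m)"
      using dvd_choose[OF ps_primes] n_def by blast
    show ?case using key[OF nz pw dk dv, of 0] by (simp add: f_def)
  qed
qed

end
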